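(* Let $\Omega\subset\mathbb{R}^d$ be bounded, and let $u$ be the exact solution of the transport equation $\partial_t u+a\cdot\nabla u=0$ on $\Omega$, so that $u(t^{m},x)=u(t^{m-1},\mathcal{X}^{m}(x))$ for all $m\ge1$, $x\in\Omega$, where $\mathcal{X}^m(x)=\mathcal{X}(t^{m-1};t^m,x)$. Assume each $\mathcal{X}^m$ is a $C^1$ diffeomorphism of $\Omega$ onto itself with $d_{\mathcal{X}}^m>0$. Let $u_{\theta^m}$ ($m\ge0$) be the computed approximations and $u_{\theta^m_\ast}$ the exact minimizers, as defined in the context; assume each $u_{\theta^m}$ is $C^2$ on $\mathbb{R}^d$ with bounded Hessian, $\sup_{\mathbb{R}^d}|D^2u_{\theta^m}|\le H$. Let the approximate characteristic map $\widetilde{\mathcal{X}}^m(x)=\widetilde{\mathcal{X}}(t^{m-1};t^m,x)$ be produced by a solver of order $p$ using $n_\tau$ sub-time steps, and set $h=\Delta t/n_\tau\in(0,1]$. Assume there are constants $M_p\ge0$, $K_R\ge0$ such that for all $m\ge1$ and $x\in\Omega$, $$\Bigl|\widetilde{\mathcal{X}}^m(x)-\mathcal{X}^m(x)-M_p\,(\mathcal{X}^m)^{(p+1)}(x)\,h^{p+1}\Bigr|\le K_R\,h^{2p+2},$$ where $(\mathcal{X}^m)^{(p+1)}(x)$ is the $(p+1)$-th derivative of $s\mapsto\mathcal{X}(s;t^m,x)$ evaluated at $s=t^{m-1}$, and assume $\|(\mathcal{X}^m)^{(p+1)}\|_{L^\infty(\Omega)}\le B$. Then for every $n\ge0$, $$\|u_{\theta^n}-u(t^n,\cdot)\|_{L^2(\Omega)}\le\sum_{\mathfrak{n}=0}^{n}\bigl(\varepsilon_{\rm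 int}^{\mathfrak{n}}+\varepsilon_{\rm opt}^{\mathfrak{n}}+\varepsilon_{\rm approx}^{\mathfrak{n}}\bigr)\mathcal{D}^{\mathfrak{n}}+\Bigl(\sum_{\mathfrak{n}=1}^{n}\mathcal{C}^{\mathfrak{n}}\mathcal{D}^{\mathfrak{n}}\Bigr)h^{p+1}+K\,h^{2p+2},$$ where $\mathcal{C}^{\mathfrak{n}}=\frac{M_p}{d_{\mathcal{X}}^{\mathfrak{n}}}\|(\mathcal{X}^{\mathfrak{n}})^{(p+1)}\|_{L^\infty(\Omega)}\|\nabla u_{\theta^{\mathfrak{n}-1}}\|_{L^2(\Omega)}$, $\mathcal{D}^{\mathfrak{n}}=\prod_{m=\mathfrak{n}+1}^{n}\frac{1}{d_{\mathcal{X}}^m}$ (empty product $=1$), and $K$ is a constant independent of $h\in(0,1]$, depending only on $n$, $|\Omega|$, $H$, $M_p$, $K_R$, $B$, the numbers $d_{\mathcal{X}}^m$ and the norms $\|\nabla u_{\theta^m}\|_{L^2(\Omega)}$, $m\le n$.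
   Context: Backward characteristics: $s\mapsto\mathcal{X}(s;t,x)$ solves $\frac{d}{ds}\mathcal{X}=a(s,\mathcal{X})$, $\mathcal{X}(t;t,x)=x$. Time grid $t^{m}=t^{m-1}+\Delta t$. For a map $\mathcal{X}^m$, $d_{\mathcal{X}}^m=\sqrt{\inf_{y\in\Omega}|\det D\mathcal{X}^m(y)|}$. Fix collocation points $x_1,\dots,x_{N_c}\in\Omega$. $\mathcal{V}$ is a fixed set of functions (e.g. neural networks $x\mapsto\mathcal{N}(x,\vartheta)$). $u_{\theta^0_\ast}$ minimizes $\frac1{N_c}\sum_k|v(x_k)-u_0(x_k)|^2$ over $v\in\mathcal{V}$ (with $u_0=u(0,\cdot)$) and for $m\ge1$, $u_{\theta^m_\ast}$ minimizes $\frac1{N_c}\sum_k|v(x_k)-u_{\theta^{m-1}}(\widetilde{\mathcal{X}}^m(x_k))|^2$ over $v\in\mathcal{V}$; $u_{\theta^m}\in\mathcal{V}$ is any (approximate) computed solution of the same problem. Error terms: integration error $\varepsilon_{\rm int}(f;(x_k))=\bigl|\|f\|_{L^2(\Omega)}-\frac1{N_c}\sum_k|f(x_k)|^2\bigr|$; optimization error $\varepsilon_{\rm opt}(f,g;(x_k))=\frac1{N_c}\sum_k|f(x_k)-g(x_k)|^2$; approximation error $\varepsilon_{\rm approx}(f,g)=\|f-g\|_{L^2(\Omega)}$. Set $\varepsilon_{\rm int}^{\mathfrak n}=\varepsilon_{\rm int}(u_{\theta^{\mathfrak n}}-u_{\theta^{\mathfrak n}_\ast};(x_k))$, $\varepsilon_{\rm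 opt}^{\mathfrak n}=\varepsilon_{\rm opt}(u_{\theta^{\mathfrak n}},u_{\theta^{\mathfrak n}_\ast};(x_k))$, $\varepsilon_{\rm approx}^{\mathfrak n}=\varepsilon_{\rm approx}(u_{\theta^{\mathfrak n}_\ast},u_{\theta^{\mathfrak n-1}}\circ\widetilde{\mathcal{X}}^{\mathfrak n})$ if $\mathfrak n>0$ and $\varepsilon_{\rm approx}^{0}=\varepsilon_{\rm approx}(u_{\theta^0_\ast},u_0)$. *)

theory Defs
  imports "HOL-Analysis.Analysis"
begin

definition L2norm :: "(real^'d) set \<Rightarrow> (real^'d \<Rightarrow> 'b::real_normed_vector) \<Rightarrow> real" where
  "L2norm \<Omega> f = sqrt (integral\<^sup>L (lebesgue_on \<Omega>) (\<lambda>x. (norm (f x))^2))"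

definition supnorm_on :: "(real^'d) set \<Rightarrow> (real^'d \<Rightarrow> 'b::real_normed_vector) \<Rightarrow> real" where
  "supnorm_on \<Omega> g = (SUP x\<in>\<Omega>. norm (g x))"

definition grad :: "(real^'d \<Rightarrow> real) \<Rightarrow> real^'d \<Rightarrow> real^'d" where
  "grad f x = (\<chi> i. frechet_derivative f (at x) (axis i 1))"

definition hess :: "(real^'d \<Rightarrow> real) \<Rightarrow> real^'d \<Rightarrow> real^'d \<Rightarrow> real^'d" where
  "hess f x = frechet_derivative (grad f) (at x)"

definition C1_on :: "(real^'d) set \<Rightarrow> (real^'d \<Rightarrow> real^'e) \<Rightarrow> bool" where
  "C1_on S f \<longleftrightarrow> (\<forall>y\<in>S. f differentiable (at y)) \<and> continuous_on S (\<lambda>y. jacobian f (at y))"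

definition C2_everywhere :: "(real^'d \<Rightarrow> real) \<Rightarrow> bool" where
  "C2_everywhere f \<longleftrightarrow> (\<forall>x. f differentiable (at x)) \<and> C1_on UNIV (grad f)"

definition C1_diffeo_onto :: "(real^'d) set \<Rightarrow> (real^'d \<Rightarrow> real^'d) \<Rightarrow> bool" where
  "C1_diffeo_onto S F \<longleftrightarrow> F ` S = S \<and> C1_on S F \<and>
     (\<exists>G. G ` S = S \<and> C1_on S G \<and> (\<forall>y\<in>S. G (F y) = y) \<and> (\<forall>y\<in>S. F (G y) = y))"

definition dX :: "(real^'d) set \<Rightarrow> (real^'d \<Rightarrow> real^'d) \<Rightarrow> real" where
  "dX \<Omega> F = sqrt (INF y\<in>\<Omega>. \<bar>det (jacobian F (at y))\<bar>)"

definition hderiv :: "nat \<Rightarrow> (real \<Rightarrow> 'b::real_normed_vector) \<Rightarrow> real \<Rightarrow> 'b" where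
  "hderiv k f = ((\<lambda>g s. vector_derivative g (at s)) ^^ k) f"

definition eps_int :: "(real^'d) set \<Rightarrow> (nat \<Rightarrow> real^'d) \<Rightarrow> nat \<Rightarrow> (real^'d \<Rightarrow> real) \<Rightarrow> real" where
  "eps_int \<Omega> xs Nc f = \<bar>L2norm \<Omega> f - (\<Sum>k<Nc. \<bar>f (xs k)\<bar>^2) / real Nc\<bar>"

definition eps_opt :: "(nat \<Rightarrow> real^'d) \<Rightarrow> nat \<Rightarrow> (real^'d \<Rightarrow> real) \<Rightarrow> (real^'d \<Rightarrow> real) \<Rightarrow> real" where
  "eps_opt xs Nc f g = (\<Sum>k<Nc. \<bar>f (xs k) - g (xs k)\<bar>^2) / real Nc"

definition eps_approx :: "(real^'d) set \<Rightarrow> (real^'d \<Rightarrow> real) \<Rightarrow> (real^'d \<Rightarrow> real) \<Rightarrow> real" where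
  "eps_approx \<Omega> f g = L2norm \<Omega> (\<lambda>x. f x - g x)"

definition is_colloc_min :: "(real^'d \<Rightarrow> real) set \<Rightarrow> (nat \<Rightarrow> real^'d) \<Rightarrow> nat \<Rightarrow> (real^'d \<Rightarrow> real) \<Rightarrow> (real^'d \<Rightarrow> real) \<Rightarrow> bool" where
  "is_colloc_min V xs Nc target f \<longleftrightarrow> f \<in> V \<and> (\<forall>v\<in>V. eps_opt xs Nc f target \<le> eps_opt xs Nc v target)"

end

theory Submission
  imports Defs "HOL-Combinatorics.Permutations"
begin


typedef ('a::finite) idx = "{..<CARD('a)} :: nat set"
  morphisms rep_idx abs_idx
  by (rule exI[of _ 0]) (simp add: finite_UNIV_card_ge_0)

instantiation idx :: (finite) linorder begin
definition "x \<le> y \<longleftrightarrow> rep_idx x \<le> rep_idx y"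
definition "x < y \<longleftrightarrow> rep_idx x < rep_idx y"
instance by standard (auto simp: less_eq_idx_def less_idx_def rep_idx_inject)
end

instance idx :: (finite) finite
proof
  show "finite (UNIV :: 'a idx set)"
    by (metis type_definition.univ[OF type_definition_idx] finite_imageI finite_lessThan)
qed

instance idx :: (finite) wellorder
proof
  fix P :: "'a idx \<Rightarrow> bool" and a :: "'a idx"
  assume H: "\<And>x. (\<And>y. y < x \<Longrightarrow> P y) \<Longrightarrow> P x"
  show "P a"
    by (induct a rule: measure_induct_rule[of rep_idx]) (rule H, simp add: less_idx_def)
qed

lemma card_idx: "CARD('a::finite idx) = CARD('a)"
  using type_definition.card[OF type_definition_idx] by simp

lemma exists_bij_idx: "\<exists>\<psi>::'a::finite idx \<Rightarrow> 'a. bij \<psi>"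
  using finite_same_card_bij[of "UNIV :: 'a idx set" "UNIV :: 'a set"] card_idx by auto

lemma det_reindex:
  fixes A :: "real^'n::finite^'n" and \<psi> :: "'m::finite \<Rightarrow> 'n"
  assumes b: "bij \<psi>"
  shows "det ((\<chi> j k. A $ \<psi> j $ \<psi> k) :: real^'m^'m) = det A"
proof -
  let ?c = "\<lambda>q. \<psi> \<circ> q \<circ> inv \<psi>"
  have sgn: "sign (?c q) = sign q" if q: "q permutes (UNIV::'m set)" for q
  proof -
    interpret permutes_bij_finite q UNIV UNIV \<psi> "inv \<psi>" "\<lambda>x. if x \<in> UNIV then \<psi> (q (inv \<psi> x)) else x"
      by unfold_locales (use q b in \<open>auto simp: bij_is_inj\<close>)
    have "?c q = (\<lambda>x. if x \<in> UNIV then \<psi> (q (inv \<psi> x)) else x)" by auto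
    with sign_p' show ?thesis by (simp add: p'_def)
  qed
  have perm: "?c q permutes UNIV" if q: "q permutes (UNIV::'m set)" for q
  proof -
    interpret permutes_bij_finite q UNIV UNIV \<psi> "inv \<psi>" "\<lambda>x. if x \<in> UNIV then \<psi> (q (inv \<psi> x)) else x"
      by unfold_locales (use q b in \<open>auto simp: bij_is_inj\<close>)
    have "?c q = (\<lambda>x. if x \<in> UNIV then \<psi> (q (inv \<psi> x)) else x)" by auto
    with permutes_p' show ?thesis by simp
  qed
  have perm2: "inv \<psi> \<circ> p \<circ> \<psi> permutes UNIV" if p: "p permutes (UNIV::'n set)" for p
  proof -
    have bi: "bij (inv \<psi>)" using b bij_imp_bij_inv by blast
    interpret permutes_bij_finite p UNIV UNIV "inv \<psi>" \<psi> "\<lambda>x. if x \<in> UNIV then inv \<psi> (p (\<psi> x)) else x"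
      by unfold_locales (use p b bi in \<open>auto simp: bij_is_inj bij_inv_eq_iff bij_is_surj surj_f_inv_f\<close>)
    have "inv \<psi> \<circ> p \<circ> \<psi> = (\<lambda>x. if x \<in> UNIV then inv \<psi> (p (\<psi> x)) else x)" by auto
    with permutes_p' show ?thesis by simp
  qed
  have bb: "bij_betw ?c {q. q permutes (UNIV::'m set)} {p. p permutes (UNIV::'n set)}"
  proof (rule bij_betw_byWitness[where f'="\<lambda>p. inv \<psi> \<circ> p \<circ> \<psi>"])
    show "\<forall>a\<in>{q. q permutes UNIV}. inv \<psi> \<circ> ?c a \<circ> \<psi> = a"
      using b by (auto simp: fun_eq_iff bij_is_inj)
    show "\<forall>a'\<in>{p. p permutes UNIV}. ?c (inv \<psi> \<circ> a' \<circ> \<psi>) = a'"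
      using b by (auto simp: fun_eq_iff bij_is_surj surj_f_inv_f)
  qed (use perm perm2 in auto)
  have prod: "(\<Prod>i\<in>UNIV. A $ i $ ?c q i) = (\<Prod>j\<in>UNIV. A $ \<psi> j $ \<psi> (q j))" for q
  proof -
    have "(\<Prod>i\<in>UNIV. A $ i $ ?c q i) = (\<Prod>j\<in>UNIV. A $ \<psi> j $ ?c q (\<psi> j))"
      using prod.reindex_bij_betw[of \<psi> UNIV UNIV "\<lambda>i. A $ i $ ?c q i"] b by simp
    also have "\<dots> = (\<Prod>j\<in>UNIV. A $ \<psi> j $ \<psi> (q j))"
      using b by (simp add: bij_is_inj)
    finally show ?thesis .
  qed
  have "det A = (\<Sum>p\<in>{p. p permutes UNIV}. of_int (sign p) * (\<Prod>i\<in>UNIV. A $ i $ p i))"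
    by (simp add: det_def)
  also have "\<dots> = (\<Sum>q\<in>{q. q permutes UNIV}. of_int (sign (?c q)) * (\<Prod>i\<in>UNIV. A $ i $ ?c q i))"
    using sum.reindex_bij_betw[OF bb, of "\<lambda>p. of_int (sign p) * (\<Prod>i\<in>UNIV. A $ i $ p i)"] by simp
  also have "\<dots> = (\<Sum>q\<in>{q. q permutes UNIV}. of_int (sign q) * (\<Prod>j\<in>UNIV. A $ \<psi> j $ \<psi> (q j)))"
    using sgn prod[unfolded comp_def] by (intro sum.cong refl) (simp add: comp_def)
  also have "\<dots> = det ((\<chi> j k. A $ \<psi> j $ \<psi> k) :: real^'m^'m)"
    by (simp add: det_def)
  finally show ?thesis by simp
qed



definition perm_vec :: "('e::finite \<Rightarrow> 'd::finite) \<Rightarrow> real^'d \<Rightarrow> real^'e" where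
  "perm_vec \<psi> x = (\<chi> j. x $ \<psi> j)"

lemma prod_Basis_cart: "(\<Prod>b\<in>Basis. (x::real^'n::finite) \<bullet> b) = (\<Prod>i\<in>UNIV. x $ i)"
  by (simp add: Basis_vec_def cart_eq_inner_axis axis_eq_axis prod.UNION_disjoint)

lemma linear_perm_vec: "linear (perm_vec \<psi>)"
  by (auto simp: linear_iff vec_eq_iff perm_vec_def)

lemma perm_vec_inv:
  assumes "bij \<psi>"
  shows "perm_vec (inv \<psi>) (perm_vec \<psi> x) = x" "perm_vec \<psi> (perm_vec (inv \<psi>) y) = y"
  using assms by (auto simp: vec_eq_iff perm_vec_def bij_is_surj surj_f_inv_f bij_is_inj)

lemma perm_vec_borel[measurable]: "perm_vec \<psi> \<in> borel_measurable borel"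
  by (intro borel_measurable_continuous_onI linear_continuous_on linear_conv_bounded_linear[THEN iffD1] linear_perm_vec)

lemma lborel_perm_vec:
  fixes \<psi> :: "'e::finite \<Rightarrow> 'd::finite"
  assumes b: "bij \<psi>"
  shows "lborel = distr lborel borel (perm_vec \<psi>)"
proof (rule lborel_eqI)
  fix l u :: "real^'e" assume le: "\<And>b. b \<in> Basis \<Longrightarrow> l \<bullet> b \<le> u \<bullet> b"
  have lei: "l $ i \<le> u $ i" for i
  proof -
    have "axis i 1 \<in> (Basis::(real^'e) set)" by (auto simp: Basis_vec_def)
    from le[OF this] show ?thesis by (simp add: cart_eq_inner_axis)
  qed
  let ?L = "perm_vec (inv \<psi>) l" and ?U = "perm_vec (inv \<psi>) u"
  have eq: "perm_vec \<psi> -` box l u = box ?L ?U"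
  proof -
    have "x \<in> box ?L ?U \<longleftrightarrow> perm_vec \<psi> x \<in> box l u" for x
    proof -
      have "x \<in> box ?L ?U \<longleftrightarrow> (\<forall>i. l $ inv \<psi> i < x $ i \<and> x $ i < u $ inv \<psi> i)"
        by (simp add: mem_box_cart perm_vec_def)
      also have "\<dots> \<longleftrightarrow> (\<forall>j. l $ j < x $ \<psi> j \<and> x $ \<psi> j < u $ j)"
        using b by (metis bij_inv_eq_iff)
      also have "\<dots> \<longleftrightarrow> perm_vec \<psi> x \<in> box l u"
        by (simp add: mem_box_cart perm_vec_def)
      finally show ?thesis .
    qed
    then show ?thesis by auto
  qed
  have "emeasure (distr lborel borel (perm_vec \<psi>)) (box l u) = emeasure lborel (box ?L ?U)"
    by (simp add: emeasure_distr eq)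
  also have "\<dots> = (\<Prod>i\<in>UNIV. u $ inv \<psi> i - l $ inv \<psi> i)"
  proof -
    have "\<forall>b\<in>Basis. ?L \<bullet> b \<le> ?U \<bullet> b"
      using lei by (auto simp: Basis_vec_def inner_axis perm_vec_def)
    then have "emeasure lborel (box ?L ?U) = (\<Prod>b\<in>Basis. (?U - ?L) \<bullet> b)"
      by (intro emeasure_lborel_box) auto
    also have "(\<Prod>b\<in>Basis. (?U - ?L) \<bullet> b) = (\<Prod>i\<in>UNIV. u $ inv \<psi> i - l $ inv \<psi> i)"
      by (simp add: prod_Basis_cart perm_vec_def)
    finally show ?thesis .
  qed
  also have "(\<Prod>i\<in>UNIV. u $ inv \<psi> i - l $ inv \<psi> i) = (\<Prod>j\<in>UNIV. u $ j - l $ j)"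
    using prod.reindex_bij_betw[of "inv \<psi>" UNIV UNIV "\<lambda>j. u $ j - l $ j"] b bij_imp_bij_inv by auto
  finally show "emeasure (distr lborel borel (perm_vec \<psi>)) (box l u) = (\<Prod>b\<in>Basis. (u - l) \<bullet> b)"
    by (simp add: prod_Basis_cart)
qed simp

lemma lebesgue_perm_vec:
  fixes \<psi> :: "'e::finite \<Rightarrow> 'd::finite"
  assumes b: "bij \<psi>"
  shows "perm_vec \<psi> \<in> lebesgue \<rightarrow>\<^sub>M lebesgue" "distr lebesgue lebesgue (perm_vec \<psi>) = lebesgue"
proof -
  have 1: "distr lebesgue lborel (perm_vec \<psi>) = lborel"
  proof -
    have "distr lebesgue lborel (perm_vec \<psi>) = distr lborel lborel (perm_vec \<psi>)"
      by (rule distr_completion) simp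
    also have "\<dots> = distr lborel borel (perm_vec \<psi>)"
      by (rule distr_cong) auto
    finally show ?thesis using lborel_perm_vec[OF b] by simp
  qed
  then have eq: "null_sets lborel = null_sets (distr lebesgue lborel (perm_vec \<psi>))" by simp
  show m: "perm_vec \<psi> \<in> lebesgue \<rightarrow>\<^sub>M lebesgue"
    by (simp add: completion.measurable_completion2 eq measurable_completion)
  have "lebesgue = completion (distr lebesgue lborel (perm_vec \<psi>))" using 1 by simp
  also have "\<dots> = distr lebesgue (completion lborel) (perm_vec \<psi>)"
    by (subst completion.completion_distr_eq) (auto simp: eq measurable_completion)
  finally show "distr lebesgue lebesgue (perm_vec \<psi>) = lebesgue" by simp
qed



lemma lebesgue_on_absint_iff:
  fixes h :: "'a::euclidean_space \<Rightarrow> 'b::euclidean_space"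
  assumes "T \<in> sets lebesgue"
  shows "integrable (lebesgue_on T) h \<longleftrightarrow> h absolutely_integrable_on T"
  using assms by (simp add: set_integrable_def integrable_restrict_space)

lemma cv_core_wo:
  fixes F :: "real^'n::{finite,wellorder} \<Rightarrow> real^'n::_" and f :: "real^'n::_ \<Rightarrow> real"
  assumes S: "S \<in> sets lebesgue"
    and der: "\<And>x. x \<in> S \<Longrightarrow> (F has_derivative F' x) (at x within S)"
    and inj: "inj_on F S"
    and fi: "integrable (lebesgue_on (F ` S)) f"
  shows "integrable (lebesgue_on S) (\<lambda>x. \<bar>det (matrix (F' x))\<bar> * f (F x)) \<and>
         integral\<^sup>L (lebesgue_on S) (\<lambda>x. \<bar>det (matrix (F' x))\<bar> * f (F x)) = integral\<^sup>L (lebesgue_on (F ` S)) f"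
proof -
  have FS: "F ` S \<in> sets lebesgue"
    using der by (intro differentiable_image_in_sets_lebesgue[OF S]) (auto simp: differentiable_on_def differentiable_def)
  define fv where "fv y = ((\<chi> i. f y) :: real^1)" for y
  have ax: "(\<chi> i. c :: real^1) \<bullet> axis i 1 = c" for c i by (simp add: inner_axis)
  have fa: "f absolutely_integrable_on (F ` S)" using fi FS lebesgue_on_absint_iff by blast
  have fva: "fv absolutely_integrable_on (F ` S)"
  proof (rule absolutely_integrable_componentwise)
    fix b :: "real^1" assume "b \<in> Basis"
    then obtain i where "b = axis i 1" by (auto simp: Basis_vec_def)
    then show "(\<lambda>x. fv x \<bullet> b) absolutely_integrable_on F ` S" using fa by (simp add: fv_def ax)
  qed
  have "(\<lambda>x. \<bar>det (matrix (F' x))\<bar> *\<^sub>R fv (F x)) absolutely_integrable_on S \<and>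
           integral S (\<lambda>x. \<bar>det (matrix (F' x))\<bar> *\<^sub>R fv (F x)) = integral (F ` S) fv"
    using has_absolute_integral_change_of_variables[OF S der inj, of fv "integral (F ` S) fv"] fva by blast
  then have A: "(\<lambda>x. \<bar>det (matrix (F' x))\<bar> *\<^sub>R fv (F x)) absolutely_integrable_on S"
     and B: "integral S (\<lambda>x. \<bar>det (matrix (F' x))\<bar> *\<^sub>R fv (F x)) = integral (F ` S) fv" by auto
  have eqv: "(\<lambda>x. (\<bar>det (matrix (F' x))\<bar> *\<^sub>R fv (F x)) \<bullet> axis 1 1) = (\<lambda>x. \<bar>det (matrix (F' x))\<bar> * f (F x))"
    by (simp add: fv_def ax)
  have G: "(\<lambda>x. \<bar>det (matrix (F' x))\<bar> * f (F x)) absolutely_integrable_on S"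
    using absolutely_integrable_component[OF A, of "axis 1 1"] eqv by simp
  have "integral S (\<lambda>x. \<bar>det (matrix (F' x))\<bar> * f (F x)) = integral S (\<lambda>x. \<bar>det (matrix (F' x))\<bar> *\<^sub>R fv (F x)) \<bullet> axis 1 1"
    using integral_component_eq[OF set_lebesgue_integral_eq_integral(1)[OF A], of "axis 1 1"] eqv by simp
  also have "\<dots> = integral (F ` S) fv \<bullet> axis 1 1" using B by simp
  also have "\<dots> = integral (F ` S) f"
    using integral_component_eq[OF set_lebesgue_integral_eq_integral(1)[OF fva], of "axis 1 1"] by (simp add: fv_def ax)
  finally have I: "integral S (\<lambda>x. \<bar>det (matrix (F' x))\<bar> * f (F x)) = integral (F ` S) f" .
  have Gi: "integrable (lebesgue_on S) (\<lambda>x. \<bar>det (matrix (F' x))\<bar> * f (F x))"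
    using G S lebesgue_on_absint_iff by blast
  show ?thesis
    using Gi I lebesgue_integral_eq_integral[OF Gi S] lebesgue_integral_eq_integral[OF fi FS] by simp
qed

lemma perm_vec_image:
  assumes b: "bij \<psi>"
  shows "perm_vec \<psi> ` S = perm_vec (inv \<psi>) -` S"
  using perm_vec_inv[OF b] by (auto simp: image_iff) (metis)

lemma perm_vec_image_sets:
  fixes \<psi> :: "'e::finite \<Rightarrow> 'd::finite"
  assumes b: "bij \<psi>" and S: "S \<in> sets lebesgue"
  shows "perm_vec \<psi> ` S \<in> sets lebesgue"
proof -
  have bi: "bij (inv \<psi>)" using b bij_imp_bij_inv by blast
  have "perm_vec (inv \<psi>) -` S \<inter> space lebesgue \<in> sets lebesgue"
    using measurable_sets[OF lebesgue_perm_vec(1)[OF bi] S] .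
  then show ?thesis by (simp add: perm_vec_image[OF b])
qed

lemma transfer1:
  fixes \<psi> :: "'e::finite \<Rightarrow> 'd::finite" and g :: "real^'e \<Rightarrow> real"
  assumes b: "bij \<psi>" and S: "S \<in> sets lebesgue"
    and gi: "integrable (lebesgue_on (perm_vec \<psi> ` S)) g"
  shows "integrable (lebesgue_on S) (\<lambda>x. g (perm_vec \<psi> x)) \<and>
         integral\<^sup>L (lebesgue_on S) (\<lambda>x. g (perm_vec \<psi> x)) = integral\<^sup>L (lebesgue_on (perm_vec \<psi> ` S)) g"
proof -
  let ?L = "perm_vec \<psi>"
  have LS: "?L ` S \<in> sets lebesgue" by (rule perm_vec_image_sets[OF b S])
  define h where "h = (\<lambda>y. indicator (?L ` S) y *\<^sub>R g y)"
  have hi: "integrable lebesgue h"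
    using gi LS by (simp add: integrable_restrict_space h_def)
  have hm: "h \<in> borel_measurable lebesgue" using hi by auto
  have ind: "indicator (?L ` S) (?L x) = (indicator S x :: real)" for x
    using perm_vec_inv[OF b] by (auto simp: indicator_def image_iff) metis
  have hL: "h (?L x) = indicator S x *\<^sub>R g (?L x)" for x by (simp add: h_def ind)
  have "integrable (distr lebesgue lebesgue ?L) h"
    using hi lebesgue_perm_vec(2)[OF b] by simp
  then have "integrable lebesgue (\<lambda>x. h (?L x))"
    using integrable_distr_eq[OF lebesgue_perm_vec(1)[OF b] hm] by simp
  then have 1: "integrable (lebesgue_on S) (\<lambda>x. g (?L x))"
    using S by (simp add: integrable_restrict_space hL)
  have "integral\<^sup>L lebesgue h = integral\<^sup>L (distr lebesgue lebesgue ?L) h"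
    using lebesgue_perm_vec(2)[OF b] by simp
  also have "\<dots> = integral\<^sup>L lebesgue (\<lambda>x. h (?L x))"
    by (rule integral_distr[OF lebesgue_perm_vec(1)[OF b] hm])
  finally have "integral\<^sup>L lebesgue h = integral\<^sup>L lebesgue (\<lambda>x. indicator S x *\<^sub>R g (?L x))"
    by (simp add: hL)
  then have 2: "integral\<^sup>L (lebesgue_on S) (\<lambda>x. g (?L x)) = integral\<^sup>L (lebesgue_on (?L ` S)) g"
    using S LS by (simp add: integral_restrict_space h_def)
  show ?thesis using 1 2 by simp
qed

lemma matrix_perm_conj:
  fixes \<psi> :: "'e::finite \<Rightarrow> 'd::finite" and A :: "real^'d \<Rightarrow> real^'d"
  assumes b: "bij \<psi>"
  shows "matrix (\<lambda>v. perm_vec \<psi> (A (perm_vec (inv \<psi>) v))) = (\<chi> j k. matrix A $ \<psi> j $ \<psi> k)"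
proof -
  have ax: "perm_vec (inv \<psi>) (axis k 1) = axis (\<psi> k) 1" for k
    using b by (auto simp: perm_vec_def vec_eq_iff axis_def bij_inv_eq_iff bij_is_inj)
  show ?thesis by (simp add: matrix_def ax del: vec_lambda_beta) (simp add: vec_eq_iff perm_vec_def)
qed

lemma cv_core:
  fixes F :: "real^'d::finite \<Rightarrow> real^'d" and f :: "real^'d \<Rightarrow> real"
  assumes S: "S \<in> sets lebesgue"
    and der: "\<And>x. x \<in> S \<Longrightarrow> (F has_derivative F' x) (at x within S)"
    and inj: "inj_on F S"
    and fi: "integrable (lebesgue_on (F ` S)) f"
  shows "integrable (lebesgue_on S) (\<lambda>x. \<bar>det (matrix (F' x))\<bar> * f (F x)) \<and>
         integral\<^sup>L (lebesgue_on S) (\<lambda>x. \<bar>det (matrix (F' x))\<bar> * f (F x)) = integral\<^sup>L (lebesgue_on (F ` S)) f"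
proof -
  obtain \<psi> :: "'d idx \<Rightarrow> 'd" where b: "bij \<psi>" using exists_bij_idx by blast
  have bi: "bij (inv \<psi>)" using b bij_imp_bij_inv by blast
  let ?L = "perm_vec \<psi>" and ?Li = "perm_vec (inv \<psi>)"
  note LL = perm_vec_inv[OF b]
  have FS: "F ` S \<in> sets lebesgue"
    using der by (intro differentiable_image_in_sets_lebesgue[OF S]) (auto simp: differentiable_on_def differentiable_def)
  define Sh where "Sh = ?L ` S"
  define Fh where "Fh = (\<lambda>y. ?L (F (?Li y)))"
  define Fh' where "Fh' = (\<lambda>y v. ?L (F' (?Li y) (?Li v)))"
  define fh where "fh = (\<lambda>y. f (?Li y))"
  have Sh: "Sh \<in> sets lebesgue" unfolding Sh_def by (rule perm_vec_image_sets[OF b S])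
  have LiSh: "?Li ` Sh = S" unfolding Sh_def using LL by (force simp: image_image)
  have bl: "bounded_linear (perm_vec \<phi>)" for \<phi> :: "'a::finite \<Rightarrow> 'b::finite"
    by (simp add: linear_conv_bounded_linear[symmetric] linear_perm_vec)
  have derh: "(Fh has_derivative Fh' y) (at y within Sh)" if y: "y \<in> Sh" for y
  proof -
    have "?Li y \<in> S" using y LiSh by blast
    have "((\<lambda>y. F (?Li y)) has_derivative (\<lambda>v. F' (?Li y) (?Li v))) (at y within Sh)"
      by (rule has_derivative_in_compose2[of S F F' ?Li Sh y ?Li])
         (use der LiSh y bl in \<open>auto intro: bounded_linear_imp_has_derivative\<close>)
    from bounded_linear.has_derivative[OF bl this] show ?thesis
      by (simp add: Fh_def Fh'_def)
  qed
  have injh: "inj_on Fh Sh"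
    using inj LL unfolding Fh_def Sh_def inj_on_def by (metis imageE)
  have FhSh: "Fh ` Sh = ?L ` (F ` S)"
    unfolding Fh_def Sh_def using LL by (force simp: image_image)
  have T': "?L ` (F ` S) \<in> sets lebesgue" by (rule perm_vec_image_sets[OF b FS])
  have LiT: "?Li ` (?L ` (F ` S)) = F ` S" using LL by (force simp: image_image)
  have tr1: "integrable (lebesgue_on (?L ` (F ` S))) fh \<and>
             integral\<^sup>L (lebesgue_on (?L ` (F ` S))) fh = integral\<^sup>L (lebesgue_on (F ` S)) f"
    using transfer1[OF bi T', of f] fi LiT by (simp add: fh_def)
  have wo: "integrable (lebesgue_on Sh) (\<lambda>y. \<bar>det (matrix (Fh' y))\<bar> * fh (Fh y)) \<and>
         integral\<^sup>L (lebesgue_on Sh) (\<lambda>y. \<bar>det (matrix (Fh' y))\<bar> * fh (Fh y)) = integral\<^sup>L (lebesgue_on (Fh ` Sh)) fh"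
    using cv_core_wo[OF Sh derh injh] tr1 unfolding FhSh by blast
  have bk: "integrable (lebesgue_on S) (\<lambda>x. (\<lambda>y. \<bar>det (matrix (Fh' y))\<bar> * fh (Fh y)) (?L x)) \<and>
     integral\<^sup>L (lebesgue_on S) (\<lambda>x. (\<lambda>y. \<bar>det (matrix (Fh' y))\<bar> * fh (Fh y)) (?L x))
       = integral\<^sup>L (lebesgue_on Sh) (\<lambda>y. \<bar>det (matrix (Fh' y))\<bar> * fh (Fh y))"
    using transfer1[OF b S] wo unfolding Sh_def by blast
  have eqG: "(\<lambda>y. \<bar>det (matrix (Fh' y))\<bar> * fh (Fh y)) (?L x) = \<bar>det (matrix (F' x))\<bar> * f (F x)" for x
  proof -
    have "Fh' (?L x) = (\<lambda>v. ?L (F' x (?Li v)))" by (simp add: Fh'_def LL)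
    then have "det (matrix (Fh' (?L x))) = det (matrix (F' x))"
      using matrix_perm_conj[OF b, of "F' x"] det_reindex[OF b, of "matrix (F' x)"] by simp
    moreover have "fh (Fh (?L x)) = f (F x)" by (simp add: fh_def Fh_def LL)
    ultimately show ?thesis by simp
  qed
  show ?thesis using bk wo tr1 FhSh by (simp add: eqG)
qed



definition SI :: "(real^'d::finite) set \<Rightarrow> (real^'d \<Rightarrow> real) \<Rightarrow> bool" where
  "SI \<Omega> f \<longleftrightarrow> f \<in> borel_measurable (lebesgue_on \<Omega>) \<and> integrable (lebesgue_on \<Omega>) (\<lambda>x. (f x)^2)"

lemma L2norm_real: "L2norm \<Omega> (f :: real^'d::finite \<Rightarrow> real) = sqrt (integral\<^sup>L (lebesgue_on \<Omega>) (\<lambda>x. (f x)^2))"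
  by (simp add: L2norm_def)

lemma L2norm_nonneg: "0 \<le> L2norm \<Omega> f"
  by (simp add: L2norm_def integral_nonneg_AE)

lemma L2norm_cong:
  assumes "\<And>x. x \<in> \<Omega> \<Longrightarrow> f x = g x"
  shows "L2norm \<Omega> f = L2norm \<Omega> g"
proof -
  have "integral\<^sup>L (lebesgue_on \<Omega>) (\<lambda>x. (norm (f x))^2) = integral\<^sup>L (lebesgue_on \<Omega>) (\<lambda>x. (norm (g x))^2)"
    by (rule Bochner_Integration.integral_cong) (auto simp: assms)
  then show ?thesis by (simp add: L2norm_def)
qed

lemma SI_cong:
  assumes "\<And>x. x \<in> \<Omega> \<Longrightarrow> f x = g x" "SI \<Omega> f"
  shows "SI \<Omega> g"
proof -
  have "g \<in> borel_measurable (lebesgue_on \<Omega>)"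
    using measurable_cong[of "lebesgue_on \<Omega>" f g] assms by (simp add: SI_def)
  moreover have "integrable (lebesgue_on \<Omega>) (\<lambda>x. (g x)^2)"
    using Bochner_Integration.integrable_cong[of "lebesgue_on \<Omega>" "lebesgue_on \<Omega>" "\<lambda>x. (f x)^2" "\<lambda>x. (g x)^2"] assms
    by (simp add: SI_def)
  ultimately show ?thesis by (simp add: SI_def)
qed

lemma real_sqrt_sum_bound:
  fixes X A B :: real
  assumes A: "0 \<le> A" and B: "0 \<le> B" and H: "\<And>l. l > 0 \<Longrightarrow> X \<le> (1 + l) * A + (1 + 1 / l) * B"
  shows "X \<le> (sqrt A + sqrt B)^2"
proof (cases "A > 0 \<and> B > 0")
  case True
  let ?l = "sqrt B / sqrt A"
  have l: "?l > 0" using True by simp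
  have "(1 + ?l) * A + (1 + 1 / ?l) * B = (sqrt A + sqrt B)^2"
    using True by (simp add: field_simps power2_eq_square)
  then show ?thesis using H[OF l] by simp
next
  case False
  then have "A = 0 \<or> B = 0" using A B by auto
  then show ?thesis
  proof
    assume A0: "A = 0"
    show ?thesis
    proof (rule ccontr)
      assume "\<not> ?thesis"
      then have XB: "X > B" using A0 B by simp
      have d: "2 * B / (X - B) + 1 > 0" using XB B by (simp add: add_nonneg_pos)
      have "X \<le> B + B / (2 * B / (X - B) + 1)"
        using H[OF d] A0 by (simp add: algebra_simps)
      moreover have "B / (2 * B / (X - B) + 1) < X - B"
      proof -
        have "B < (X - B) * (2 * B / (X - B) + 1)" using XB B by (simp add: field_simps)
        then show ?thesis using d by (simp add: divide_less_eq mult.commute)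
      qed
      ultimately show False by simp
    qed
  next
    assume B0: "B = 0"
    show ?thesis
    proof (rule ccontr)
      assume "\<not> ?thesis"
      then have XA: "X > A" using B0 A by simp
      have d: "(X - A) / (2 * (A + 1)) > 0" using XA A by simp
      have "X \<le> A + (X - A) / (2 * (A + 1)) * A"
        using H[OF d] B0 by (simp add: algebra_simps)
      moreover have "(X - A) / (2 * (A + 1)) * A < X - A"
        using XA A by (simp add: field_simps) (smt (verit) mult_left_mono)
      ultimately show False by simp
    qed
  qed
qed

lemma young_l:
  fixes a b l :: real
  assumes l: "l > 0"
  shows "2 * a * b \<le> l * a^2 + b^2 / l"
proof -
  have "0 \<le> (l * a - b)^2" by simp
  then have "2 * l * a * b \<le> l^2 * a^2 + b^2" by (simp add: power2_eq_square algebra_simps)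
  moreover have "l * (l * a^2 + b^2 / l) = l^2 * a^2 + b^2" using l by (simp add: field_simps power2_eq_square)
  ultimately have "l * (2 * a * b) \<le> l * (l * a^2 + b^2 / l)" by (simp add: algebra_simps)
  then show ?thesis using l by simp
qed

lemma SI_add:
  assumes f: "SI \<Omega> f" and g: "SI \<Omega> g"
  shows "SI \<Omega> (\<lambda>x. f x + g x)" "L2norm \<Omega> (\<lambda>x. f x + g x) \<le> L2norm \<Omega> f + L2norm \<Omega> g"
proof -
  have fm: "f \<in> borel_measurable (lebesgue_on \<Omega>)" and fi: "integrable (lebesgue_on \<Omega>) (\<lambda>x. (f x)^2)"
    using f by (auto simp: SI_def)
  have gm: "g \<in> borel_measurable (lebesgue_on \<Omega>)" and gi: "integrable (lebesgue_on \<Omega>) (\<lambda>x. (g x)^2)"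
    using g by (auto simp: SI_def)
  have m: "(\<lambda>x. f x + g x) \<in> borel_measurable (lebesgue_on \<Omega>)" using fm gm by simp
  have pw: "(f x + g x)^2 \<le> (1 + l) * (f x)^2 + (1 + 1 / l) * (g x)^2" if l: "l > 0" for l x
    using young_l[OF l, of "f x" "g x"] by (simp add: power2_eq_square algebra_simps)
  have bi: "integrable (lebesgue_on \<Omega>) (\<lambda>x. (1 + l) * (f x)^2 + (1 + 1 / l) * (g x)^2)" for l
    using fi gi by simp
  have i: "integrable (lebesgue_on \<Omega>) (\<lambda>x. (f x + g x)^2)"
    by (rule Bochner_Integration.integrable_bound[OF bi[of 1]]) (use m pw[of 1] in auto)
  then show "SI \<Omega> (\<lambda>x. f x + g x)" using m by (simp add: SI_def)
  let ?A = "integral\<^sup>L (lebesgue_on \<Omega>) (\<lambda>x. (f x)^2)" and ?B = "integral\<^sup>L (lebesgue_on \<Omega>) (\<lambda>x. (g x)^2)"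
  have A: "0 \<le> ?A" and B: "0 \<le> ?B" by (auto intro: integral_nonneg_AE)
  have "integral\<^sup>L (lebesgue_on \<Omega>) (\<lambda>x. (f x + g x)^2) \<le> (1 + l) * ?A + (1 + 1 / l) * ?B" if l: "l > 0" for l
  proof -
    have "integral\<^sup>L (lebesgue_on \<Omega>) (\<lambda>x. (f x + g x)^2)
        \<le> integral\<^sup>L (lebesgue_on \<Omega>) (\<lambda>x. (1 + l) * (f x)^2 + (1 + 1 / l) * (g x)^2)"
      by (rule Bochner_Integration.integral_mono[OF i bi]) (use pw[OF l] in auto)
    also have "\<dots> = (1 + l) * ?A + (1 + 1 / l) * ?B" using fi gi by simp
    finally show ?thesis .
  qed
  then have "integral\<^sup>L (lebesgue_on \<Omega>) (\<lambda>x. (f x + g x)^2) \<le> (sqrt ?A + sqrt ?B)^2"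
    by (intro real_sqrt_sum_bound[OF A B])
  then have "sqrt (integral\<^sup>L (lebesgue_on \<Omega>) (\<lambda>x. (f x + g x)^2)) \<le> sqrt ?A + sqrt ?B"
    using real_sqrt_le_mono by fastforce
  then show "L2norm \<Omega> (\<lambda>x. f x + g x) \<le> L2norm \<Omega> f + L2norm \<Omega> g"
    by (simp add: L2norm_real)
qed

lemma SI_mono:
  assumes fm: "f \<in> borel_measurable (lebesgue_on \<Omega>)" and g: "SI \<Omega> g"
    and le: "\<And>x. x \<in> \<Omega> \<Longrightarrow> \<bar>f x\<bar> \<le> g x"
  shows "SI \<Omega> f" "L2norm \<Omega> f \<le> L2norm \<Omega> g"
proof -
  have gi: "integrable (lebesgue_on \<Omega>) (\<lambda>x. (g x)^2)" using g by (simp add: SI_def)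
  have sq: "(f x)^2 \<le> (g x)^2" if "x \<in> \<Omega>" for x
    using le[OF that] by (metis abs_le_square_iff abs_of_nonneg abs_ge_zero order_trans)
  have i: "integrable (lebesgue_on \<Omega>) (\<lambda>x. (f x)^2)"
    by (rule Bochner_Integration.integrable_bound[OF gi]) (use fm sq in \<open>auto intro!: AE_I2\<close>)
  then show "SI \<Omega> f" using fm by (simp add: SI_def)
  have "integral\<^sup>L (lebesgue_on \<Omega>) (\<lambda>x. (f x)^2) \<le> integral\<^sup>L (lebesgue_on \<Omega>) (\<lambda>x. (g x)^2)"
    by (rule Bochner_Integration.integral_mono[OF i gi]) (use sq in auto)
  then show "L2norm \<Omega> f \<le> L2norm \<Omega> g" by (simp add: L2norm_real)
qed

lemma SI_scale:
  assumes f: "SI \<Omega> f"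
  shows "SI \<Omega> (\<lambda>x. c * f x)" "L2norm \<Omega> (\<lambda>x. c * f x) = \<bar>c\<bar> * L2norm \<Omega> f"
proof -
  have fm: "f \<in> borel_measurable (lebesgue_on \<Omega>)" and fi: "integrable (lebesgue_on \<Omega>) (\<lambda>x. (f x)^2)"
    using f by (auto simp: SI_def)
  have e: "(\<lambda>x. (c * f x)^2) = (\<lambda>x. c^2 * (f x)^2)" by (simp add: power_mult_distrib)
  show "SI \<Omega> (\<lambda>x. c * f x)" using fm fi by (simp add: SI_def e)
  show "L2norm \<Omega> (\<lambda>x. c * f x) = \<bar>c\<bar> * L2norm \<Omega> f"
    by (simp add: L2norm_real e real_sqrt_mult)
qed

lemma SI_diff:
  assumes f: "SI \<Omega> f" and g: "SI \<Omega> g"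
  shows "SI \<Omega> (\<lambda>x. f x - g x)" "L2norm \<Omega> (\<lambda>x. f x - g x) \<le> L2norm \<Omega> f + L2norm \<Omega> g"
proof -
  have g': "SI \<Omega> (\<lambda>x. (-1) * g x)" and n: "L2norm \<Omega> (\<lambda>x. (-1) * g x) = L2norm \<Omega> g"
    using SI_scale[OF g, of "-1"] by auto
  show "SI \<Omega> (\<lambda>x. f x - g x)" using SI_add(1)[OF f g'] by simp
  show "L2norm \<Omega> (\<lambda>x. f x - g x) \<le> L2norm \<Omega> f + L2norm \<Omega> g" using SI_add(2)[OF f g'] n by simp
qed

lemma SI_const:
  assumes "\<Omega> \<in> lmeasurable"
  shows "SI \<Omega> (\<lambda>x. c)" "L2norm \<Omega> (\<lambda>x. c) = \<bar>c\<bar> * sqrt (measure lebesgue \<Omega>)"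
proof -
  have S: "\<Omega> \<in> sets lebesgue" using assms by auto
  have i: "integrable (lebesgue_on \<Omega>) (\<lambda>x. c^2)"
    using assms S by (simp add: integrable_restrict_space integrable_indicator_iff fmeasurable_def)
  then show "SI \<Omega> (\<lambda>x. c)" by (simp add: SI_def)
  have "integral\<^sup>L (lebesgue_on \<Omega>) (\<lambda>x. c^2) = c^2 * measure lebesgue \<Omega>"
    using S by (simp add: measure_restrict_space)
  then show "L2norm \<Omega> (\<lambda>x. c) = \<bar>c\<bar> * sqrt (measure lebesgue \<Omega>)"
    by (simp add: L2norm_real real_sqrt_mult)
qed

lemma SI_bdd:
  assumes "\<Omega> \<in> lmeasurable" "f \<in> borel_measurable (lebesgue_on \<Omega>)" "\<And>x. x \<in> \<Omega> \<Longrightarrow> \<bar>f x\<bar> \<le> M"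
  shows "SI \<Omega> f"
  using SI_mono(1)[OF assms(2) SI_const(1)[OF assms(1)] assms(3)] .



lemma comp_L2:
  fixes F :: "real^'d::finite \<Rightarrow> real^'d" and w :: "real^'d \<Rightarrow> real"
  assumes S: "\<Omega> \<in> sets lebesgue" and img: "F ` \<Omega> = \<Omega>" and inj: "inj_on F \<Omega>"
    and der: "\<And>x. x \<in> \<Omega> \<Longrightarrow> (F has_derivative F' x) (at x within \<Omega>)"
    and c: "c > 0" and dc: "\<And>x. x \<in> \<Omega> \<Longrightarrow> c \<le> \<bar>det (matrix (F' x))\<bar>"
    and w: "SI \<Omega> w" and wm: "(\<lambda>x. w (F x)) \<in> borel_measurable (lebesgue_on \<Omega>)"
  shows "SI \<Omega> (\<lambda>x. w (F x))" "L2norm \<Omega> (\<lambda>x. w (F x)) \<le> L2norm \<Omega> w / sqrt c"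
proof -
  have wi: "integrable (lebesgue_on (F ` \<Omega>)) (\<lambda>y. (w y)^2)" using w img by (simp add: SI_def)
  from cv_core[OF S der inj wi] img
  have ci: "integrable (lebesgue_on \<Omega>) (\<lambda>x. \<bar>det (matrix (F' x))\<bar> * (w (F x))^2)"
    and ce: "integral\<^sup>L (lebesgue_on \<Omega>) (\<lambda>x. \<bar>det (matrix (F' x))\<bar> * (w (F x))^2) = integral\<^sup>L (lebesgue_on \<Omega>) (\<lambda>y. (w y)^2)"
    by auto
  have pw: "(w (F x))^2 \<le> (1 / c) * (\<bar>det (matrix (F' x))\<bar> * (w (F x))^2)" if x: "x \<in> \<Omega>" for x
  proof -
    have "c * (w (F x))^2 \<le> \<bar>det (matrix (F' x))\<bar> * (w (F x))^2"
      using dc[OF x] by (simp add: mult_right_mono)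
    then show ?thesis using c by (simp add: field_simps)
  qed
  have bi: "integrable (lebesgue_on \<Omega>) (\<lambda>x. (1 / c) * (\<bar>det (matrix (F' x))\<bar> * (w (F x))^2))"
    using ci by simp
  have m2: "(\<lambda>x. (w (F x))^2) \<in> borel_measurable (lebesgue_on \<Omega>)" using wm by simp
  have i: "integrable (lebesgue_on \<Omega>) (\<lambda>x. (w (F x))^2)"
    by (rule Bochner_Integration.integrable_bound[OF bi m2])
       (use pw c in \<open>auto intro!: AE_I2 simp: abs_mult\<close>)
  then show "SI \<Omega> (\<lambda>x. w (F x))" using wm by (simp add: SI_def)
  have "integral\<^sup>L (lebesgue_on \<Omega>) (\<lambda>x. (w (F x))^2)
        \<le> integral\<^sup>L (lebesgue_on \<Omega>) (\<lambda>x. (1 / c) * (\<bar>det (matrix (F' x))\<bar> * (w (F x))^2))"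
    by (rule Bochner_Integration.integral_mono[OF i bi]) (use pw in auto)
  also have "\<dots> = (1 / c) * integral\<^sup>L (lebesgue_on \<Omega>) (\<lambda>y. (w y)^2)" using ce by simp
  finally have "sqrt (integral\<^sup>L (lebesgue_on \<Omega>) (\<lambda>x. (w (F x))^2)) \<le> sqrt ((1 / c) * integral\<^sup>L (lebesgue_on \<Omega>) (\<lambda>y. (w y)^2))"
    using real_sqrt_le_mono by blast
  then show "L2norm \<Omega> (\<lambda>x. w (F x)) \<le> L2norm \<Omega> w / sqrt c"
    by (simp add: L2norm_real real_sqrt_mult real_sqrt_divide)
qed



lemma grad_deriv:
  fixes f :: "real^'d::finite \<Rightarrow> real"
  assumes "f differentiable (at x)"
  shows "(f has_derivative (\<lambda>v. grad f x \<bullet> v)) (at x)"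
proof -
  let ?D = "frechet_derivative f (at x)"
  have d: "(f has_derivative ?D) (at x)" using assms frechet_derivative_works by blast
  have l: "linear ?D" using has_derivative_linear[OF d] .
  have "?D v = grad f x \<bullet> v" for v
  proof -
    have "?D v = ?D (\<Sum>i\<in>UNIV. v $ i *\<^sub>R axis i 1)"
      using basis_expansion[of v] by (simp add: scalar_mult_eq_scaleR)
    also have "\<dots> = (\<Sum>i\<in>UNIV. v $ i * ?D (axis i 1))"
      using l by (simp add: linear_sum linear_scale)
    also have "\<dots> = grad f x \<bullet> v"
      by (simp add: grad_def inner_vec_def mult.commute)
    finally show ?thesis .
  qed
  then have "?D = (\<lambda>v. grad f x \<bullet> v)" by auto
  with d show ?thesis by simp
qed

lemma taylor_bound:
  fixes f :: "real^'d::finite \<Rightarrow> real"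
  assumes C2: "C2_everywhere f" and H: "\<And>x. onorm (hess f x) \<le> H"
  shows "\<bar>f y - f x\<bar> \<le> norm (grad f x) * norm (y - x) + H * (norm (y - x))^2"
proof -
  have df: "\<And>z. f differentiable (at z)" and dg: "\<And>z. grad f differentiable (at z)"
    using C2 by (auto simp: C2_everywhere_def C1_on_def)
  have gd: "(grad f has_derivative hess f z) (at z)" for z
    unfolding hess_def using dg frechet_derivative_works by blast
  have H0: "0 \<le> H" using H[of x] onorm_pos_le[OF has_derivative_bounded_linear[OF gd[of x]]] by linarith
  have lip: "norm (grad f z - grad f x) \<le> H * norm (z - x)" for z
    by (rule differentiable_bound[OF convex_UNIV]) (use gd H in auto)
  define \<psi> where "\<psi> z = f z - grad f x \<bullet> z" for z
  have pd: "(\<psi> has_derivative (\<lambda>v. (grad f z - grad f x) \<bullet> v)) (at z within closed_segment x y)" for z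
  proof -
    have "((\<lambda>z. f z - grad f x \<bullet> z) has_derivative (\<lambda>v. grad f z \<bullet> v - grad f x \<bullet> v)) (at z)"
      by (intro has_derivative_diff grad_deriv df bounded_linear_imp_has_derivative bounded_linear_inner_right)
    then show ?thesis unfolding \<psi>_def by (auto simp: inner_diff_left intro: has_derivative_at_withinI)
  qed
  have onb: "onorm (\<lambda>v. (grad f z - grad f x) \<bullet> v) \<le> H * norm (y - x)" if z: "z \<in> closed_segment x y" for z
  proof -
    have "norm (z - x) \<le> norm (y - x)"
      using z by (metis dist_commute dist_in_closed_segment dist_norm)
    then have b: "norm (grad f z - grad f x) \<le> H * norm (y - x)"
      using lip[of z] H0 by (meson mult_left_mono order_trans)
    have "onorm (\<lambda>v. (grad f z - grad f x) \<bullet> v) \<le> norm (grad f z - grad f x)"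
      by (rule onorm_le) (simp add: Cauchy_Schwarz_ineq2)
    with b show ?thesis by simp
  qed
  have "norm (\<psi> y - \<psi> x) \<le> H * norm (y - x) * norm (y - x)"
    by (rule differentiable_bound[OF convex_closed_segment pd onb]) auto
  then have "\<bar>f y - f x - grad f x \<bullet> (y - x)\<bar> \<le> H * (norm (y - x))^2"
    by (simp add: \<psi>_def inner_diff_right power2_eq_square algebra_simps)
  moreover have "\<bar>grad f x \<bullet> (y - x)\<bar> \<le> norm (grad f x) * norm (y - x)" by (rule Cauchy_Schwarz_ineq2)
  ultimately show ?thesis by linarith
qed

lemma hess_bound_nonneg:
  fixes f :: "real^'d::finite \<Rightarrow> real"
  assumes C2: "C2_everywhere f" and H: "\<And>x. onorm (hess f x) \<le> H"
  shows "0 \<le> H"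
proof -
  have dg: "grad f differentiable (at x)" for x
    using C2 by (auto simp: C2_everywhere_def C1_on_def)
  have gd: "(grad f has_derivative hess f x) (at x)" for x
    unfolding hess_def using dg frechet_derivative_works by blast
  show ?thesis using H[of 0] onorm_pos_le[OF has_derivative_bounded_linear[OF gd[of 0]]] by linarith
qed

lemma grad_continuous:
  fixes f :: "real^'d::finite \<Rightarrow> real"
  assumes C2: "C2_everywhere f"
  shows "continuous_on UNIV (grad f)"
proof -
  have dg: "grad f differentiable (at x)" for x
    using C2 by (auto simp: C2_everywhere_def C1_on_def)
  then show ?thesis
    by (intro differentiable_imp_continuous_on) (auto simp: differentiable_at_imp_differentiable_on)
qed



lemma SI_comp_bounded:
  fixes f :: "real^'d::finite \<Rightarrow> real" and \<phi> :: "real^'d \<Rightarrow> real^'d"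
  assumes L: "\<Omega> \<in> lmeasurable" and f: "continuous_on UNIV f"
    and \<phi>: "\<phi> \<in> borel_measurable (lebesgue_on \<Omega>)" and K: "compact K" and in_K: "\<And>x. x \<in> \<Omega> \<Longrightarrow> \<phi> x \<in> K"
  shows "SI \<Omega> (\<lambda>x. f (\<phi> x))"
proof -
  have "compact (f ` K)" using K f by (metis compact_continuous_image continuous_on_subset subset_UNIV)
  then obtain M where M: "\<And>y. y \<in> K \<Longrightarrow> \<bar>f y\<bar> \<le> M"
    by (metis bounded_iff compact_imp_bounded imageI real_norm_def)
  have m: "(\<lambda>x. f (\<phi> x)) \<in> borel_measurable (lebesgue_on \<Omega>)"
    using measurable_compose[OF \<phi> borel_measurable_continuous_onI[OF f]] by (simp add: o_def)
  show ?thesis by (rule SI_bdd[OF L m]) (use M in_K in auto)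
qed

lemma SI_cont:
  fixes f :: "real^'d::finite \<Rightarrow> real"
  assumes L: "\<Omega> \<in> lmeasurable" and b: "bounded \<Omega>" and f: "continuous_on UNIV f"
  shows "SI \<Omega> f"
proof -
  have "(\<lambda>x. x) \<in> borel_measurable (lebesgue_on \<Omega>)"
    using continuous_imp_measurable_on_sets_lebesgue[OF continuous_on_id] L by blast
  then show ?thesis
    using SI_comp_bounded[OF L f _ compact_closure[THEN iffD2, OF b], of "\<lambda>x. x"]
    by (simp add: closure_subset[THEN subsetD])
qed

lemma rec_sum1:
  fixes e d :: "nat \<Rightarrow> real"
  shows "(\<Sum>nn\<le>Suc n. e nn * (\<Prod>m\<in>{nn<..Suc n}. 1 / d m))
       = e (Suc n) + (\<Sum>nn\<le>n. e nn * (\<Prod>m\<in>{nn<..n}. 1 / d m)) / d (Suc n)"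
proof -
  have p: "(\<Prod>m\<in>{nn<..Suc n}. 1 / d m) = (\<Prod>m\<in>{nn<..n}. 1 / d m) * (1 / d (Suc n))" if "nn \<le> n" for nn
  proof -
    have "{nn<..Suc n} = insert (Suc n) {nn<..n}" using that by auto
    then show ?thesis by (simp add: mult.commute)
  qed
  have "(\<Sum>nn\<le>Suc n. e nn * (\<Prod>m\<in>{nn<..Suc n}. 1 / d m))
      = (\<Sum>nn\<le>n. e nn * (\<Prod>m\<in>{nn<..Suc n}. 1 / d m)) + e (Suc n)"
    by simp
  also have "(\<Sum>nn\<le>n. e nn * (\<Prod>m\<in>{nn<..Suc n}. 1 / d m)) = (\<Sum>nn\<le>n. e nn * (\<Prod>m\<in>{nn<..n}. 1 / d m) / d (Suc n))"
    by (intro sum.cong refl) (simp add: p)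
  finally show ?thesis by (simp add: sum_divide_distrib)
qed

lemma rec_sum2:
  fixes e d :: "nat \<Rightarrow> real"
  shows "(\<Sum>nn\<in>{1..Suc n}. e nn * (\<Prod>m\<in>{nn<..Suc n}. 1 / d m))
       = e (Suc n) + (\<Sum>nn\<in>{1..n}. e nn * (\<Prod>m\<in>{nn<..n}. 1 / d m)) / d (Suc n)"
proof -
  have p: "(\<Prod>m\<in>{nn<..Suc n}. 1 / d m) = (\<Prod>m\<in>{nn<..n}. 1 / d m) * (1 / d (Suc n))" if "nn \<le> n" for nn
  proof -
    have "{nn<..Suc n} = insert (Suc n) {nn<..n}" using that by auto
    then show ?thesis by (simp add: mult.commute)
  qed
  have "(\<Sum>nn\<in>{1..Suc n}. e nn * (\<Prod>m\<in>{nn<..Suc n}. 1 / d m))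
      = (\<Sum>nn\<in>{1..n}. e nn * (\<Prod>m\<in>{nn<..Suc n}. 1 / d m)) + e (Suc n)"
    by simp
  also have "(\<Sum>nn\<in>{1..n}. e nn * (\<Prod>m\<in>{nn<..Suc n}. 1 / d m)) = (\<Sum>nn\<in>{1..n}. e nn * (\<Prod>m\<in>{nn<..n}. 1 / d m) / d (Suc n))"
    by (intro sum.cong refl) (simp add: p)
  finally show ?thesis by (simp add: sum_divide_distrib)
qed

fun Kfun :: "nat \<Rightarrow> real \<Rightarrow> real \<Rightarrow> real \<Rightarrow> real \<Rightarrow> real \<Rightarrow> real list \<Rightarrow> real list \<Rightarrow> real" where
  "Kfun 0 vol H Mp KR B ds gs = 0"
| "Kfun (Suc n) vol H Mp KR B ds gs =
     KR * gs ! n / ds ! n + H * (Mp * B + KR)^2 * sqrt vol + Kfun n vol H Mp KR B (butlast ds) (butlast gs) / ds ! n"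

lemma Kfun_Suc_map:
  "Kfun (Suc n) vol H Mp KR B (map d [1..<Suc n + 1]) (map g [0..<Suc n + 1]) =
   KR * g n / d (Suc n) + H * (Mp * B + KR)^2 * sqrt vol + Kfun n vol H Mp KR B (map d [1..<n + 1]) (map g [0..<n + 1]) / d (Suc n)"
proof -
  have a: "map d [1..<Suc n + 1] ! n = d (Suc n)" by (simp del: upt_Suc)
  have b: "map g [0..<Suc n + 1] ! n = g n" by (simp del: upt_Suc)
  have "map d [1..<Suc n + 1] = map d [1..<n + 1] @ [d (Suc n)]" by simp
  then have c: "butlast (map d [1..<Suc n + 1]) = map d [1..<n + 1]" by (simp only: butlast_snoc)
  have "map g [0..<Suc n + 1] = map g [0..<n + 1] @ [g (Suc n)]" by simp
  then have e: "butlast (map g [0..<Suc n + 1]) = map g [0..<n + 1]" by (simp only: butlast_snoc)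
  show ?thesis by (simp only: Kfun.simps a b c e)
qed



theorem mainTheorem2:
  fixes p :: nat
  shows "\<exists>Kf :: nat \<Rightarrow> real \<Rightarrow> real \<Rightarrow> real \<Rightarrow> real \<Rightarrow> real \<Rightarrow> real list \<Rightarrow> real list \<Rightarrow> real.
   \<forall>(\<Omega> :: (real^'d) set) (V :: (real^'d \<Rightarrow> real) set) (xs :: nat \<Rightarrow> real^'d) (Nc :: nat)
     (u :: real \<Rightarrow> real^'d \<Rightarrow> real) (X :: real \<Rightarrow> real \<Rightarrow> real^'d \<Rightarrow> real^'d)
     (a :: real \<Rightarrow> real^'d \<Rightarrow> real^'d) (t :: nat \<Rightarrow> real) (\<Delta>t :: real)
     (Xt :: nat \<Rightarrow> real^'d \<Rightarrow> real^'d) (ntau :: nat) (h :: real)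
     (u\<theta> :: nat \<Rightarrow> real^'d \<Rightarrow> real) (u\<theta>s :: nat \<Rightarrow> real^'d \<Rightarrow> real)
     (Mp :: real) (KR :: real) (B :: real) (H :: real).
     ( open \<Omega> \<and> bounded \<Omega>
     \<and> (\<forall>v\<in>V. continuous_on UNIV v)
     \<and> Nc > 0 \<and> (\<forall>k<Nc. xs k \<in> \<Omega>)
     \<and> \<Delta>t > 0 \<and> t 0 = 0 \<and> (\<forall>m. t (Suc m) = t m + \<Delta>t)
     \<and> (\<forall>m\<ge>1. \<forall>x\<in>\<Omega>. X (t m) (t m) x = x
            \<and> (\<forall>s\<in>{t (m-1)..t m}. ((\<lambda>s. X s (t m) x) has_vector_derivative a s (X s (t m) x)) (at s within {t (m-1)..t m})))
     \<and> (\<forall>m\<ge>1. \<forall>x\<in>\<Omega>. u (t m) x = u (t (m-1)) (X (t (m-1)) (t m) x))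
     \<and> (\<forall>m. integrable (lebesgue_on \<Omega>) (\<lambda>x. (u (t m) x)^2) \<and> (\<lambda>x. u (t m) x) \<in> borel_measurable (lebesgue_on \<Omega>))
     \<and> (\<forall>m\<ge>1. C1_diffeo_onto \<Omega> (\<lambda>x. X (t (m-1)) (t m) x) \<and> dX \<Omega> (\<lambda>x. X (t (m-1)) (t m) x) > 0)
     \<and> is_colloc_min V xs Nc (u (t 0)) (u\<theta>s 0)
     \<and> (\<forall>m\<ge>1. is_colloc_min V xs Nc (\<lambda>x. u\<theta> (m-1) (Xt m x)) (u\<theta>s m))
     \<and> (\<forall>m. u\<theta> m \<in> V \<and> C2_everywhere (u\<theta> m) \<and> (\<forall>x. onorm (hess (u\<theta> m) x) \<le> H))
     \<and> (\<forall>m\<ge>1. Xt m \<in> borel_measurable (lebesgue_on \<Omega>))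
     \<and> ntau > 0 \<and> h = \<Delta>t / real ntau \<and> h \<le> 1
     \<and> Mp \<ge> 0 \<and> KR \<ge> 0
     \<and> (\<forall>m\<ge>1. \<forall>x\<in>\<Omega>.
           norm (Xt m x - X (t (m-1)) (t m) x
                 - (Mp * h^(p+1)) *\<^sub>R hderiv (p+1) (\<lambda>s. X s (t m) x) (t (m-1))) \<le> KR * h^(2*p+2))
     \<and> (\<forall>m\<ge>1. \<forall>x\<in>\<Omega>. norm (hderiv (p+1) (\<lambda>s. X s (t m) x) (t (m-1))) \<le> B) )
     \<longrightarrow>
     (\<forall>n. L2norm \<Omega> (\<lambda>x. u\<theta> n x - u (t n) x)
        \<le> (\<Sum>nn\<le>n. (eps_int \<Omega> xs Nc (\<lambda>x. u\<theta> nn x - u\<theta>s nn x)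
                      + eps_opt xs Nc (u\<theta> nn) (u\<theta>s nn)
                      + (if nn = 0 then eps_approx \<Omega> (u\<theta>s 0) (u (t 0))
                         else eps_approx \<Omega> (u\<theta>s nn) (\<lambda>x. u\<theta> (nn-1) (Xt nn x))))
                   * (\<Prod>m\<in>{nn<..n}. 1 / dX \<Omega> (\<lambda>x. X (t (m-1)) (t m) x)))
          + (\<Sum>nn\<in>{1..n}. (Mp / dX \<Omega> (\<lambda>x. X (t (nn-1)) (t nn) x)
                 * supnorm_on \<Omega> (\<lambda>x. hderiv (p+1) (\<lambda>s. X s (t nn) x) (t (nn-1)))
                 * L2norm \<Omega> (grad (u\<theta> (nn-1))))
                 * (\<Prod>m\<in>{nn<..n}. 1 / dX \<Omega> (\<lambda>x. X (t (m-1)) (t m) x))) * h^(p+1)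
          + Kf n (measure lebesgue \<Omega>) H Mp KR B
               (map (\<lambda>m. dX \<Omega> (\<lambda>x. X (t (m-1)) (t m) x)) [1..<n+1])
               (map (\<lambda>m. L2norm \<Omega> (grad (u\<theta> m))) [0..<n+1])
             * h^(2*p+2))"
proof (rule exI[of _ Kfun], intro allI impI, goal_cases)
  case (1 \<Omega> V xs Nc u X a t \<Delta>t Xt ntau h u\<theta> u\<theta>s Mp KR B H)
  note A = 1
  have opn: "open \<Omega>" and bdd: "bounded \<Omega>" using A by blast+
  have Vc: "\<And>v. v \<in> V \<Longrightarrow> continuous_on UNIV v" using A by blast
  have Nc0: "Nc > 0" and xsO: "\<And>k. k < Nc \<Longrightarrow> xs k \<in> \<Omega>" using A by blast+
  have ueq: "\<And>m x. m \<ge> 1 \<Longrightarrow> x \<in> \<Omega> \<Longrightarrow> u (t m) x = u (t (m-1)) (X (t (m-1)) (t m) x)"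
    using A by blast
  have uint: "\<And>m. integrable (lebesgue_on \<Omega>) (\<lambda>x. (u (t m) x)^2) \<and> (\<lambda>x. u (t m) x) \<in> borel_measurable (lebesgue_on \<Omega>)"
    using A by blast
  have dif: "\<And>m. m \<ge> 1 \<Longrightarrow> C1_diffeo_onto \<Omega> (\<lambda>x. X (t (m-1)) (t m) x) \<and> dX \<Omega> (\<lambda>x. X (t (m-1)) (t m) x) > 0"
    using A by blast
  have cm0: "is_colloc_min V xs Nc (u (t 0)) (u\<theta>s 0)" using A by blast
  have cm: "\<And>m. m \<ge> 1 \<Longrightarrow> is_colloc_min V xs Nc (\<lambda>x. u\<theta> (m-1) (Xt m x)) (u\<theta>s m)" using A by blast
  have uth: "\<And>m. u\<theta> m \<in> V \<and> C2_everywhere (u\<theta> m) \<and> (\<forall>x. onorm (hess (u\<theta> m) x) \<le> H)" using A by blast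
  have Xtm: "\<And>m. m \<ge> 1 \<Longrightarrow> Xt m \<in> borel_measurable (lebesgue_on \<Omega>)" using A by blast
  have ntau: "ntau > 0" and hdef: "h = \<Delta>t / real ntau" and h1: "h \<le> 1" and Dt: "\<Delta>t > 0" using A by blast+
  have Mp0: "Mp \<ge> 0" and KR0: "KR \<ge> 0" using A by blast+
  have Xtb: "\<And>m x. m \<ge> 1 \<Longrightarrow> x \<in> \<Omega> \<Longrightarrow> norm (Xt m x - X (t (m-1)) (t m) x
                 - (Mp * h^(p+1)) *\<^sub>R hderiv (p+1) (\<lambda>s. X s (t m) x) (t (m-1))) \<le> KR * h^(2*p+2)"
    using A by blast
  have Db: "\<And>m x. m \<ge> 1 \<Longrightarrow> x \<in> \<Omega> \<Longrightarrow> norm (hderiv (p+1) (\<lambda>s. X s (t m) x) (t (m-1))) \<le> B"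
    using A by blast

  have L: "\<Omega> \<in> lmeasurable" using lmeasurable_open[OF bdd opn] .
  have S: "\<Omega> \<in> sets lebesgue" using L by auto
  have ne: "xs 0 \<in> \<Omega>" using xsO Nc0 by blast
  then have One: "\<Omega> \<noteq> {}" by auto
  have hpos: "h > 0" using hdef ntau Dt by simp
  have B0: "B \<ge> 0" using Db[of 1 "xs 0"] ne by (meson norm_ge_zero order_trans order_refl)
  have H0: "H \<ge> 0" using hess_bound_nonneg[of "u\<theta> 0" H] uth by blast
  have contth: "continuous_on UNIV (u\<theta> m)" for m using uth Vc by blast
  have contths: "continuous_on UNIV (u\<theta>s m)" for m
  proof (cases "m = 0")
    case True then show ?thesis using cm0 Vc by (simp add: is_colloc_min_def)
  next
    case False then show ?thesis using cm[of m] Vc by (simp add: is_colloc_min_def)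
  qed
  have contg: "continuous_on UNIV (\<lambda>y. norm (grad (u\<theta> m) y))" for m
    using grad_continuous[of "u\<theta> m"] uth by (intro continuous_on_norm) blast
  have SIth: "SI \<Omega> (u\<theta> m)" for m using SI_cont[OF L bdd contth] .
  have SIths: "SI \<Omega> (u\<theta>s m)" for m using SI_cont[OF L bdd contths] .
  have SIu: "SI \<Omega> (u (t m))" for m using uint[of m] by (simp add: SI_def)

  define dd where "dd m = dX \<Omega> (\<lambda>x. X (t (m-1)) (t m) x)" for m
  define SS where "SS m = supnorm_on \<Omega> (\<lambda>x. hderiv (p+1) (\<lambda>s. X s (t m) x) (t (m-1)))" for m
  define GG where "GG m = L2norm \<Omega> (grad (u\<theta> m))" for m
  define err where "err n = L2norm \<Omega> (\<lambda>x. u\<theta> n x - u (t n) x)" for n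
  define EE where "EE nn = eps_int \<Omega> xs Nc (\<lambda>x. u\<theta> nn x - u\<theta>s nn x)
                      + eps_opt xs Nc (u\<theta> nn) (u\<theta>s nn)
                      + (if nn = 0 then eps_approx \<Omega> (u\<theta>s 0) (u (t 0))
                         else eps_approx \<Omega> (u\<theta>s nn) (\<lambda>x. u\<theta> (nn-1) (Xt nn x)))" for nn
  define vol where "vol = measure lebesgue \<Omega>"
  define c0 where "c0 = Mp * B + KR"

  have T1b: "L2norm \<Omega> (\<lambda>x. u\<theta> m x - u\<theta>s m x) \<le> eps_int \<Omega> xs Nc (\<lambda>x. u\<theta> m x - u\<theta>s m x) + eps_opt xs Nc (u\<theta> m) (u\<theta>s m)" for m
    unfolding eps_int_def eps_opt_def by linarith

  have base: "err 0 \<le> EE 0"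
  proof -
    have e: "(\<lambda>x. u\<theta> 0 x - u (t 0) x) = (\<lambda>x. (u\<theta> 0 x - u\<theta>s 0 x) + (u\<theta>s 0 x - u (t 0) x))" by auto
    have "err 0 \<le> L2norm \<Omega> (\<lambda>x. u\<theta> 0 x - u\<theta>s 0 x) + L2norm \<Omega> (\<lambda>x. u\<theta>s 0 x - u (t 0) x)"
      unfolding err_def e by (rule SI_add(2)[OF SI_diff(1)[OF SIth SIths] SI_diff(1)[OF SIths SIu]])
    then show ?thesis using T1b[of 0] by (simp add: EE_def eps_approx_def)
  qed
  obtain R where R: "\<And>x. x \<in> \<Omega> \<Longrightarrow> norm x \<le> R" using bdd by (meson bounded_iff)
  have step: "err (Suc n) \<le> EE (Suc n) + (Mp / dd (Suc n) * SS (Suc n) * GG n) * h^(p+1)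
        + (KR * GG n / dd (Suc n) + H * c0^2 * sqrt vol) * h^(2*p+2) + err n / dd (Suc n)" for n
  proof -
    define Xs where "Xs = (\<lambda>x. X (t n) (t (Suc n)) x)"
    define D where "D = (\<lambda>x. hderiv (p+1) (\<lambda>s. X s (t (Suc n)) x) (t n))"
    have dif1: "C1_diffeo_onto \<Omega> Xs" and ddpos: "dd (Suc n) > 0"
      using dif[of "Suc n"] by (simp_all add: Xs_def dd_def)
    have img: "Xs ` \<Omega> = \<Omega>" and c1: "C1_on \<Omega> Xs" using dif1 by (auto simp: C1_diffeo_onto_def)
    have inj: "inj_on Xs \<Omega>"
    proof -
      obtain Gi where "\<forall>y\<in>\<Omega>. Gi (Xs y) = y" using dif1 by (auto simp: C1_diffeo_onto_def)
      then show ?thesis by (metis inj_onI)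
    qed
    have XsO: "Xs x \<in> \<Omega>" if "x \<in> \<Omega>" for x using img that by blast
    have dXs: "Xs differentiable (at x)" if "x \<in> \<Omega>" for x using c1 that by (auto simp: C1_on_def)
    have der: "(Xs has_derivative frechet_derivative Xs (at x)) (at x within \<Omega>)" if "x \<in> \<Omega>" for x
      using dXs[OF that] frechet_derivative_works has_derivative_at_withinI by blast
    have contXs: "continuous_on \<Omega> Xs"
      using dXs by (intro differentiable_imp_continuous_on) (auto simp: differentiable_at_imp_differentiable_on)
    define I where "I = (INF y\<in>\<Omega>. \<bar>det (jacobian Xs (at y))\<bar>)"
    have I0: "0 \<le> I" unfolding I_def using One by (intro cINF_greatest) auto
    have Ile: "I \<le> \<bar>det (matrix (frechet_derivative Xs (at x)))\<bar>" if "x \<in> \<Omega>" for x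
      unfolding I_def jacobian_def[symmetric] by (rule cINF_lower[OF _ that]) (auto intro: bdd_belowI[where m=0])
    have ddI: "dd (Suc n) = sqrt I" by (simp add: dd_def dX_def Xs_def I_def)
    have Ipos: "I > 0" using ddpos ddI I0 by auto
    have sqI: "sqrt I = dd (Suc n)" using ddI by simp
    have meas_comp: "(\<lambda>x. f (Xs x)) \<in> borel_measurable (lebesgue_on \<Omega>)" if "continuous_on UNIV f" for f :: "real^'d \<Rightarrow> real"
    proof -
      have "continuous_on \<Omega> (\<lambda>x. f (Xs x))"
        using continuous_on_compose[OF contXs continuous_on_subset[OF that]] by (simp add: o_def)
      then show ?thesis using continuous_imp_measurable_on_sets_lebesgue S by blast
    qed
    have compL2: "SI \<Omega> (\<lambda>x. w (Xs x)) \<and> L2norm \<Omega> (\<lambda>x. w (Xs x)) \<le> L2norm \<Omega> w / dd (Suc n)"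
      if "SI \<Omega> w" "(\<lambda>x. w (Xs x)) \<in> borel_measurable (lebesgue_on \<Omega>)" for w
      using comp_L2[OF S img inj der Ipos Ile that] sqI by simp
    define w where "w = (\<lambda>y. norm (grad (u\<theta> n) y))"
    have SIw: "SI \<Omega> w" unfolding w_def by (rule SI_cont[OF L bdd contg])
    have wX: "SI \<Omega> (\<lambda>x. w (Xs x))" "L2norm \<Omega> (\<lambda>x. w (Xs x)) \<le> GG n / dd (Suc n)"
    proof -
      have "L2norm \<Omega> w = GG n" by (simp add: w_def GG_def L2norm_def)
      moreover have wm: "(\<lambda>x. w (Xs x)) \<in> borel_measurable (lebesgue_on \<Omega>)"
        unfolding w_def by (rule meas_comp[OF contg])
      ultimately show "SI \<Omega> (\<lambda>x. w (Xs x))" "L2norm \<Omega> (\<lambda>x. w (Xs x)) \<le> GG n / dd (Suc n)"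
        using compL2[OF SIw wm] by auto
    qed
    define w4 where "w4 = (\<lambda>y. u\<theta> n y - u (t n) y)"
    have SIw4: "SI \<Omega> w4" unfolding w4_def by (rule SI_diff(1)[OF SIth SIu])
    have T4eq: "w4 (Xs x) = u\<theta> n (Xs x) - u (t (Suc n)) x" if "x \<in> \<Omega>" for x
      using ueq[of "Suc n" x] that by (simp add: w4_def Xs_def)
    have T4m: "(\<lambda>x. u\<theta> n (Xs x) - u (t (Suc n)) x) \<in> borel_measurable (lebesgue_on \<Omega>)"
      using meas_comp[OF contth[of n]] uint[of "Suc n"] by (intro borel_measurable_diff) auto
    have w4m: "(\<lambda>x. w4 (Xs x)) \<in> borel_measurable (lebesgue_on \<Omega>)"
      using T4m measurable_cong[of "lebesgue_on \<Omega>" "\<lambda>x. w4 (Xs x)" "\<lambda>x. u\<theta> n (Xs x) - u (t (Suc n)) x"] T4eq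
      by simp
    have w4X: "SI \<Omega> (\<lambda>x. w4 (Xs x))" "L2norm \<Omega> (\<lambda>x. w4 (Xs x)) \<le> err n / dd (Suc n)"
      using compL2[OF SIw4 w4m] by (auto simp: err_def w4_def)
    have SIT4: "SI \<Omega> (\<lambda>x. u\<theta> n (Xs x) - u (t (Suc n)) x)"
      by (rule SI_cong[OF _ w4X(1)]) (simp add: T4eq)
    have T4b: "L2norm \<Omega> (\<lambda>x. u\<theta> n (Xs x) - u (t (Suc n)) x) \<le> err n / dd (Suc n)"
      using L2norm_cong[of \<Omega> "\<lambda>x. w4 (Xs x)" "\<lambda>x. u\<theta> n (Xs x) - u (t (Suc n)) x"] T4eq w4X(2) by simp
    have SSb: "norm (D x) \<le> SS (Suc n)" if "x \<in> \<Omega>" for x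
    proof -
      have "bdd_above ((\<lambda>x. norm (D x)) ` \<Omega>)" using Db[of "Suc n"] by (auto simp: D_def intro!: bdd_aboveI)
      moreover have "SS (Suc n) = (SUP x\<in>\<Omega>. norm (D x))" by (simp add: SS_def supnorm_on_def D_def)
      ultimately show ?thesis using that cSUP_upper[of x \<Omega> "\<lambda>x. norm (D x)"] by simp
    qed
    have SSB: "SS (Suc n) \<le> B"
      unfolding SS_def supnorm_on_def using One Db[of "Suc n"] by (intro cSUP_least) simp_all
    have SS0: "0 \<le> SS (Suc n)" using SSb[OF ne] norm_ge_zero order_trans by blast
    define \<alpha> where "\<alpha> = Mp * h^(p+1) * SS (Suc n) + KR * h^(2*p+2)"
    define \<beta> where "\<beta> = H * c0^2 * h^(2*p+2)"
    have hp: "h^(2*p+2) \<le> h^(p+1)" using hpos h1 by (intro power_decreasing) auto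
    have hp1: "h^(p+1) \<le> 1" using hpos h1 by (intro power_le_one) auto
    have \<alpha>0: "0 \<le> \<alpha>" using Mp0 KR0 SS0 hpos by (simp add: \<alpha>_def)
    have \<beta>0: "0 \<le> \<beta>" using H0 hpos by (simp add: \<beta>_def)
    have del1: "norm (Xt (Suc n) x - Xs x) \<le> \<alpha>" and del2: "norm (Xt (Suc n) x - Xs x) \<le> c0 * h^(p+1)"
      if x: "x \<in> \<Omega>" for x
    proof -
      have e: "norm (Xt (Suc n) x - Xs x - (Mp * h^(p+1)) *\<^sub>R D x) \<le> KR * h^(2*p+2)"
        using Xtb[of "Suc n" x] x by (simp add: Xs_def D_def)
      have "norm (Xt (Suc n) x - Xs x) \<le> norm (Xt (Suc n) x - Xs x - (Mp * h^(p+1)) *\<^sub>R D x) + norm ((Mp * h^(p+1)) *\<^sub>R D x)"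
        using norm_triangle_sub[of "Xt (Suc n) x - Xs x" "(Mp * h^(p+1)) *\<^sub>R D x"] by linarith
      also have "norm ((Mp * h^(p+1)) *\<^sub>R D x) = Mp * h^(p+1) * norm (D x)" using Mp0 hpos by simp
      finally have a: "norm (Xt (Suc n) x - Xs x) \<le> KR * h^(2*p+2) + Mp * h^(p+1) * norm (D x)" using e by linarith
      have m1: "Mp * h^(p+1) * norm (D x) \<le> Mp * h^(p+1) * SS (Suc n)"
        using SSb[OF x] Mp0 hpos by (intro mult_left_mono) auto
      show "norm (Xt (Suc n) x - Xs x) \<le> \<alpha>" using a m1 by (simp add: \<alpha>_def)
      have m2: "Mp * h^(p+1) * SS (Suc n) \<le> Mp * h^(p+1) * B"
        using SSB Mp0 hpos by (intro mult_left_mono) auto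
      have m3: "KR * h^(2*p+2) \<le> KR * h^(p+1)" using hp KR0 by (rule mult_left_mono)
      show "norm (Xt (Suc n) x - Xs x) \<le> c0 * h^(p+1)" using a m1 m2 m3 by (simp add: c0_def algebra_simps)
    qed
    have XtK: "Xt (Suc n) x \<in> cball 0 (R + c0)" if x: "x \<in> \<Omega>" for x
    proof -
      have "norm (Xt (Suc n) x) \<le> norm (Xs x) + norm (Xt (Suc n) x - Xs x)" by (rule norm_triangle_sub)
      moreover have "norm (Xs x) \<le> R" using R XsO[OF x] by blast
      moreover have "c0 * h^(p+1) \<le> c0" using hp1 Mp0 KR0 B0 by (simp add: c0_def mult_left_le)
      ultimately show ?thesis using del2[OF x] by (simp add: dist_norm)
    qed
    have SIXt: "SI \<Omega> (\<lambda>x. u\<theta> n (Xt (Suc n) x))"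
      by (rule SI_comp_bounded[OF L contth Xtm[of "Suc n"] compact_cball XtK]) simp
    have SIXs: "SI \<Omega> (\<lambda>x. u\<theta> n (Xs x))"
      by (rule SI_cong[of _ "\<lambda>x. w4 (Xs x) + u (t (Suc n)) x"]) (use SI_add(1)[OF w4X(1) SIu] T4eq in auto)
    have w0: "0 \<le> w y" for y by (simp add: w_def)
    have hsq: "(h^(p+1))^2 = h^(2*p+2)"
    proof -
      have "(h^(p+1))^2 = h^((p+1)*2)" by (rule power_mult[symmetric])
      also have "(p+1)*2 = 2*p+2" by simp
      finally show ?thesis by simp
    qed
    have T3b: "\<bar>u\<theta> n (Xt (Suc n) x) - u\<theta> n (Xs x)\<bar> \<le> \<alpha> * w (Xs x) + \<beta>" if x: "x \<in> \<Omega>" for x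
    proof -
      let ?d = "norm (Xt (Suc n) x - Xs x)"
      have tb: "\<bar>u\<theta> n (Xt (Suc n) x) - u\<theta> n (Xs x)\<bar> \<le> norm (grad (u\<theta> n) (Xs x)) * ?d + H * ?d^2"
        using taylor_bound[of "u\<theta> n" H "Xt (Suc n) x" "Xs x"] uth[of n] by blast
      have a: "norm (grad (u\<theta> n) (Xs x)) * ?d \<le> \<alpha> * w (Xs x)"
        using mult_left_mono[OF del1[OF x] w0[of "Xs x"]] by (simp add: w_def mult.commute)
      have "?d^2 \<le> (c0 * h^(p+1))^2" using del2[OF x] by (intro power_mono) auto
      also have "\<dots> = c0^2 * h^(2*p+2)" by (simp only: power_mult_distrib hsq)
      finally have b: "H * ?d^2 \<le> \<beta>" using H0 by (simp add: \<beta>_def mult_left_mono mult.assoc)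
      show ?thesis using tb a b by linarith
    qed
    have SIg3: "SI \<Omega> (\<lambda>x. \<alpha> * w (Xs x) + \<beta>)"
      by (rule SI_add(1)[OF SI_scale(1)[OF wX(1)] SI_const(1)[OF L]])
    have g3L: "L2norm \<Omega> (\<lambda>x. \<alpha> * w (Xs x) + \<beta>) \<le> \<alpha> * (GG n / dd (Suc n)) + \<beta> * sqrt vol"
    proof -
      have "L2norm \<Omega> (\<lambda>x. \<alpha> * w (Xs x) + \<beta>) \<le> L2norm \<Omega> (\<lambda>x. \<alpha> * w (Xs x)) + L2norm \<Omega> (\<lambda>x. \<beta>)"
        by (rule SI_add(2)[OF SI_scale(1)[OF wX(1)] SI_const(1)[OF L]])
      also have "\<dots> = \<alpha> * L2norm \<Omega> (\<lambda>x. w (Xs x)) + \<beta> * sqrt vol"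
        using SI_scale(2)[OF wX(1), of \<alpha>] SI_const(2)[OF L, of \<beta>] \<alpha>0 \<beta>0 by (simp add: vol_def)
      also have "\<dots> \<le> \<alpha> * (GG n / dd (Suc n)) + \<beta> * sqrt vol"
        using mult_left_mono[OF wX(2) \<alpha>0] by simp
      finally show ?thesis .
    qed
    have T3m: "(\<lambda>x. u\<theta> n (Xt (Suc n) x) - u\<theta> n (Xs x)) \<in> borel_measurable (lebesgue_on \<Omega>)"
      using SIXt SIXs by (auto simp: SI_def)
    have SIT3: "SI \<Omega> (\<lambda>x. u\<theta> n (Xt (Suc n) x) - u\<theta> n (Xs x))"
      and T3L0: "L2norm \<Omega> (\<lambda>x. u\<theta> n (Xt (Suc n) x) - u\<theta> n (Xs x)) \<le> L2norm \<Omega> (\<lambda>x. \<alpha> * w (Xs x) + \<beta>)"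
      using SI_mono[OF T3m SIg3 T3b] by auto
    have SIT1: "SI \<Omega> (\<lambda>x. u\<theta> (Suc n) x - u\<theta>s (Suc n) x)" by (rule SI_diff(1)[OF SIth SIths])
    have SIT2: "SI \<Omega> (\<lambda>x. u\<theta>s (Suc n) x - u\<theta> n (Xt (Suc n) x))" by (rule SI_diff(1)[OF SIths SIXt])
    have T2e: "L2norm \<Omega> (\<lambda>x. u\<theta>s (Suc n) x - u\<theta> n (Xt (Suc n) x)) = eps_approx \<Omega> (u\<theta>s (Suc n)) (\<lambda>x. u\<theta> n (Xt (Suc n) x))"
      by (simp add: eps_approx_def)
    let ?T1 = "\<lambda>x. u\<theta> (Suc n) x - u\<theta>s (Suc n) x"
    let ?T2 = "\<lambda>x. u\<theta>s (Suc n) x - u\<theta> n (Xt (Suc n) x)"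
    let ?T3 = "\<lambda>x. u\<theta> n (Xt (Suc n) x) - u\<theta> n (Xs x)"
    let ?T4 = "\<lambda>x. u\<theta> n (Xs x) - u (t (Suc n)) x"
    have eqs: "(\<lambda>x. u\<theta> (Suc n) x - u (t (Suc n)) x) = (\<lambda>x. ((?T1 x + ?T2 x) + ?T3 x) + ?T4 x)" by auto
    have s12: "SI \<Omega> (\<lambda>x. ?T1 x + ?T2 x)" by (rule SI_add(1)[OF SIT1 SIT2])
    have s123: "SI \<Omega> (\<lambda>x. (?T1 x + ?T2 x) + ?T3 x)" by (rule SI_add(1)[OF s12 SIT3])
    have "err (Suc n) \<le> L2norm \<Omega> (\<lambda>x. (?T1 x + ?T2 x) + ?T3 x) + L2norm \<Omega> ?T4"
      unfolding err_def eqs by (rule SI_add(2)[OF s123 SIT4])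
    also have "L2norm \<Omega> (\<lambda>x. (?T1 x + ?T2 x) + ?T3 x) \<le> L2norm \<Omega> (\<lambda>x. ?T1 x + ?T2 x) + L2norm \<Omega> ?T3"
      by (rule SI_add(2)[OF s12 SIT3])
    also have "L2norm \<Omega> (\<lambda>x. ?T1 x + ?T2 x) \<le> L2norm \<Omega> ?T1 + L2norm \<Omega> ?T2"
      by (rule SI_add(2)[OF SIT1 SIT2])
    finally have e1: "err (Suc n) \<le> L2norm \<Omega> ?T1 + L2norm \<Omega> ?T2 + L2norm \<Omega> ?T3 + L2norm \<Omega> ?T4"
      by simp
    have EEs: "EE (Suc n) = eps_int \<Omega> xs Nc ?T1 + eps_opt xs Nc (u\<theta> (Suc n)) (u\<theta>s (Suc n))
                 + eps_approx \<Omega> (u\<theta>s (Suc n)) (\<lambda>x. u\<theta> n (Xt (Suc n) x))"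
      by (simp add: EE_def)
    have alg: "\<alpha> * (GG n / dd (Suc n)) + \<beta> * sqrt vol = (Mp / dd (Suc n) * SS (Suc n) * GG n) * h^(p+1)
        + (KR * GG n / dd (Suc n) + H * c0^2 * sqrt vol) * h^(2*p+2)"
      using ddpos by (simp add: \<alpha>_def \<beta>_def field_simps)
    show ?thesis using e1 T1b[of "Suc n"] T2e T3L0 g3L T4b EEs alg by linarith
  qed
  have ddp: "dd m > 0" if "m \<ge> 1" for m using dif[OF that] by (simp add: dd_def)
  have main: "err n \<le> (\<Sum>nn\<le>n. EE nn * (\<Prod>m\<in>{nn<..n}. 1 / dd m))
      + (\<Sum>nn\<in>{1..n}. (Mp / dd nn * SS nn * GG (nn-1)) * (\<Prod>m\<in>{nn<..n}. 1 / dd m)) * h^(p+1)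
      + Kfun n vol H Mp KR B (map dd [1..<n+1]) (map GG [0..<n+1]) * h^(2*p+2)" for n
  proof (induction n)
    case 0
    then show ?case using base by simp
  next
    case (Suc n)
    let ?R = "(\<Sum>nn\<le>n. EE nn * (\<Prod>m\<in>{nn<..n}. 1 / dd m))
      + (\<Sum>nn\<in>{1..n}. (Mp / dd nn * SS nn * GG (nn-1)) * (\<Prod>m\<in>{nn<..n}. 1 / dd m)) * h^(p+1)
      + Kfun n vol H Mp KR B (map dd [1..<n+1]) (map GG [0..<n+1]) * h^(2*p+2)"
    have d: "dd (Suc n) > 0" using ddp by simp
    have "err n / dd (Suc n) \<le> ?R / dd (Suc n)" using Suc.IH d by (simp add: divide_right_mono)
    then have "err (Suc n) \<le> EE (Suc n) + (Mp / dd (Suc n) * SS (Suc n) * GG n) * h^(p+1)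
        + (KR * GG n / dd (Suc n) + H * c0^2 * sqrt vol) * h^(2*p+2) + ?R / dd (Suc n)"
      using step[of n] by linarith
    also have "\<dots> = (\<Sum>nn\<le>Suc n. EE nn * (\<Prod>m\<in>{nn<..Suc n}. 1 / dd m))
      + (\<Sum>nn\<in>{1..Suc n}. (Mp / dd nn * SS nn * GG (nn-1)) * (\<Prod>m\<in>{nn<..Suc n}. 1 / dd m)) * h^(p+1)
      + Kfun (Suc n) vol H Mp KR B (map dd [1..<Suc n+1]) (map GG [0..<Suc n+1]) * h^(2*p+2)"
      unfolding rec_sum1[of EE dd n] rec_sum2[of "\<lambda>nn. Mp / dd nn * SS nn * GG (nn-1)" dd n]
        Kfun_Suc_map[of n vol H Mp KR B dd GG]
      using d by (simp add: c0_def field_simps)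
    finally show ?case .
  qed
  show ?case
    unfolding dd_def[symmetric] SS_def[symmetric] GG_def[symmetric] err_def[symmetric] EE_def[symmetric] vol_def[symmetric]
    using main by blast

qed

end
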